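(* Let $\sigma$ be an admissible permutation on $\mathbb{Z}$ and $r=(\ldots,r_{-1},r_0,r_1,\ldots)$ be its standard record representation. For any $n\in\mathbb{N}$, let $\sigma_n=(\sigma(-n),\ldots,\sigma(n-1),\sigma(n))$ be the restriction of $\sigma$ to $\llbracket -n,n\rrbracket$ and let $s_n$ be the number of records of $\sigma_n$ smaller or equal than $0$. Then, for any finite $I\subseteq\mathbb{Z}$, there exists $n_0$ such that, for all $n\geq n_0$ we have \begin{align*} \mathrm{RBST}(\sigma)\cap\left(\bigcup_{k\in I}\mathbf{1}^k\mathbb{T}_L\right)=\mathbf{1}^{-s_n}\mathrm{BST}(\sigma_n)\cap\left(\bigcup_{k\in I}\mathbf{1}^k\mathbb{T}_L\right)\,. \end{align*} In words, the redwood tree $\mathrm{RBST}(\sigma)$ and the shifted binary search tree $\mathbf{1}^{-s_n}\mathrm{BST}(\sigma_n)$ are locally equal for $n$ large enough.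
   Context: Notation: $\mathbb{T}=\{\emptyset\}\cup\bigcup_{k\geq1}\{\mathbf{0},\mathbf{1}\}^k$ is the infinite binary tree seen as words on $\{\mathbf{0},\mathbf{1}\}$ ($\emptyset$ = root = empty word); binary trees are prefix-closed subsets of $\mathbb{T}$. For a finite sequence $x=(x_1,\ldots,x_n)$ of distinct values, its binary search tree is $\mathrm{BST}(x)=\emptyset$ if $n=0$, and otherwise $\mathrm{BST}(x)=\{\emptyset\}\cup\mathbf{0}\,\mathrm{BST}(x_-)\cup\mathbf{1}\,\mathrm{BST}(x_+)$, where $x_-$ (resp. $x_+$) is the subsequence of values smaller (resp. larger) than $x_1$, in the same order. A new letter $\Upsilon$ is added as the inverse of $\mathbf{1}$, with the convention $\mathbf{1}^k=\Upsilon^{|k|}$ for $k<0$ and $\mathbf{1}^0=\emptyset$ (so $\mathbf{1}^a\mathbf{1}^b=\mathbf{1}^{a+b}$ for $a,b\in\mathbb{Z}$); $\mathbb{T}_L:=\{\emptyset\}\cup\mathbf{0}\mathbb{T}$ and $\mathbb{Y}:=\bigcup_{k\in\mathbb{Z}}\mathbf{1}^k\mathbb{T}_L$. For $a,b\in\mathbb{Z}$, $\llbracket a,b\rrbracket=\{a,a+1,\ldots,b\}$. A permutation $\sigma$ of $\mathbb{Z}$ is admissible if $|\{i\in\mathbb{N}:\sigma(i)\notin\mathbb{N}\}|+|\{i\in\mathbb{Z}\setminus\mathbb{N}:\sigma(i)\in\mathbb{N}\}|<\infty$. A record index of $\sigma$ is an index $r$ such that $\sigma(r)>\sigma(k)$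 for all $k<r$ ($\sigma(r)$ is then a record); for an admissible $\sigma$ the set of record indices is infinite in both directions. The standard record representation of $\sigma$ is the sequence $(\ldots,r_{-1},r_0,r_1,\ldots)$ listing all record indices of $\sigma$ in strictly increasing order, indexed so that $\sigma(r_0)\leq0<\sigma(r_1)$. For $k\in\mathbb{Z}$, $\sigma[k]=(\sigma(i):\sigma(r_k)<\sigma(i)<\sigma(r_{k+1}))$ is the sequence of images between two consecutive records, in the same order as in $\sigma$. The redwood tree of $\sigma$ is $\mathrm{RBST}(\sigma):=\bigcup_{k\in\mathbb{Z}}\{\mathbf{1}^k\}\cup\mathbf{1}^k\mathbf{0}\,\mathrm{BST}(\sigma[k])\subseteq\mathbb{Y}$. *)

theory Defs
  imports Main
begin

text \<open>Words of the infinite binary tree are bool lists; letter 0 = False, letter 1 = True.\<close>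

function bst :: "int list \<Rightarrow> bool list set" where
  "bst [] = {}"
| "bst (x # xs) = {[]} \<union> (Cons False) ` bst (filter (\<lambda>y. y < x) xs)
                      \<union> (Cons True) ` bst (filter (\<lambda>y. x < y) xs)"
  by pat_completeness auto
termination
  by (relation "measure length") (auto simp: le_imp_less_Suc)

text \<open>Elements of Y are encoded as pairs (k, w) standing for the word 1^k w, with w in T_L,
  i.e. w = [] or w starts with letter 0 (False). This encoding is a bijection onto Y.\<close>

definition in_TL :: "bool list \<Rightarrow> bool" where
  "in_TL w \<longleftrightarrow> w = [] \<or> hd w = False"

definition strips :: "int set \<Rightarrow> (int \<times> bool list) set" where
  "strips I = {(k, w). k \<in> I \<and> in_TL w}"

definition T_to_Y :: "bool list \<Rightarrow> int \<times> bool list" where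
  "T_to_Y w = (int (length (takeWhile id w)), dropWhile id w)"

text \<open>Left multiplication by 1^m of a subset of T, giving a subset of Y.\<close>
definition shiftT :: "int \<Rightarrow> bool list set \<Rightarrow> (int \<times> bool list) set" where
  "shiftT m A = (\<lambda>w. case T_to_Y w of (j, v) \<Rightarrow> (j + m, v)) ` A"

definition admissible :: "(int \<Rightarrow> int) \<Rightarrow> bool" where
  "admissible \<sigma> \<longleftrightarrow> bij \<sigma> \<and>
     finite {i::int. 0 \<le> i \<and> \<sigma> i < 0} \<and> finite {i::int. i < 0 \<and> 0 \<le> \<sigma> i}"

definition record_index :: "(int \<Rightarrow> int) \<Rightarrow> int \<Rightarrow> bool" where
  "record_index \<sigma> r \<longleftrightarrow> (\<forall>k<r. \<sigma> k < \<sigma> r)"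

definition standard_record_rep :: "(int \<Rightarrow> int) \<Rightarrow> (int \<Rightarrow> int) \<Rightarrow> bool" where
  "standard_record_rep \<sigma> r \<longleftrightarrow> strict_mono r \<and> range r = {i. record_index \<sigma> i}
     \<and> \<sigma> (r 0) \<le> 0 \<and> 0 < \<sigma> (r 1)"

definition block :: "(int \<Rightarrow> int) \<Rightarrow> (int \<Rightarrow> int) \<Rightarrow> int \<Rightarrow> int list" where
  "block \<sigma> r k = map \<sigma> (sorted_list_of_set {i. \<sigma> (r k) < \<sigma> i \<and> \<sigma> i < \<sigma> (r (k + 1))})"

definition RBST :: "(int \<Rightarrow> int) \<Rightarrow> (int \<Rightarrow> int) \<Rightarrow> (int \<times> bool list) set" where
  "RBST \<sigma> r = (\<Union>k. {(k, [])} \<union> (\<lambda>w. (k, False # w)) ` bst (block \<sigma> r k))"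

definition restr :: "(int \<Rightarrow> int) \<Rightarrow> nat \<Rightarrow> int list" where
  "restr \<sigma> n = map \<sigma> [- int n .. int n]"

definition s_count :: "(int \<Rightarrow> int) \<Rightarrow> nat \<Rightarrow> nat" where
  "s_count \<sigma> n = card {j \<in> {- int n .. int n}.
       (\<forall>k \<in> {- int n ..< j}. \<sigma> k < \<sigma> j) \<and> \<sigma> j \<le> 0}"

end

theory Submission
  imports Defs
begin

function recs :: "int list \<Rightarrow> int list" where
  "recs [] = []"
| "recs (x # xs) = x # recs (filter (\<lambda>y. x < y) xs)"
  by pat_completeness auto
termination
  by (relation "measure length") (auto simp: le_imp_less_Suc)

lemma set_recs: "set (recs xs) \<subseteq> set xs"
  by (induction xs rule: recs.induct) auto

lemma bst_spine: "replicate j True \<in> bst xs \<longleftrightarrow> j < length (recs xs)"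
proof (induction xs arbitrary: j rule: recs.induct)
  case 1 then show ?case by simp
next
  case (2 x xs) then show ?case by (cases j) auto
qed

lemma bst_left:
  "replicate j True @ False # u \<in> bst xs \<longleftrightarrow> j < length (recs xs) \<and>
     u \<in> bst (filter (\<lambda>y. y < recs xs ! j \<and> (0 < j \<longrightarrow> recs xs ! (j - 1) < y)) xs)"
proof (induction xs arbitrary: j rule: recs.induct)
  case 1 then show ?case by simp
next
  case (2 x xs)
  let ?ys = "filter (\<lambda>y. x < y) xs"
  show ?case
  proof (cases j)
    case 0 then show ?thesis by (auto intro!: arg_cong[where f=bst] filter_cong)
  next
    case (Suc j')
    have "replicate j True @ False # u \<in> bst (x # xs) \<longleftrightarrow> replicate j' True @ False # u \<in> bst ?ys"
      using Suc by auto
    also have "\<dots> \<longleftrightarrow> j' < length (recs ?ys) \<and>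
       u \<in> bst (filter (\<lambda>y. y < recs ?ys ! j' \<and> (0 < j' \<longrightarrow> recs ?ys ! (j' - 1) < y)) ?ys)"
      using 2 by simp
    also have "\<dots> \<longleftrightarrow> j < length (recs (x#xs)) \<and>
     u \<in> bst (filter (\<lambda>y. y < recs (x#xs) ! j \<and> (0 < j \<longrightarrow> recs (x#xs) ! (j - 1) < y)) (x#xs))"
    proof (cases "j' < length (recs ?ys)")
      case True
      have gt: "x < recs ?ys ! i" if "i < length (recs ?ys)" for i
        using set_recs[of ?ys] nth_mem[OF that] by auto
      have "filter (\<lambda>y. y < recs ?ys ! j' \<and> (0 < j' \<longrightarrow> recs ?ys ! (j' - 1) < y)) ?ys
          = filter (\<lambda>y. y < recs (x#xs) ! j \<and> (0 < j \<longrightarrow> recs (x#xs) ! (j - 1) < y)) (x#xs)"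
      proof (cases j')
        case 0 then show ?thesis using Suc by (auto simp: filter_filter intro!: filter_cong)
      next
        case (Suc j'')
        have g: "x < recs ?ys ! j''" using gt True Suc by simp
        show ?thesis using \<open>j = Suc j'\<close> Suc g
          by (auto simp: filter_filter intro!: filter_cong)
      qed
      then show ?thesis using True Suc by simp
    next
      case False then show ?thesis using Suc by simp
    qed
    finally show ?thesis .
  qed
qed

lemma recs_map:
  fixes js :: "int list" and f :: "int \<Rightarrow> int"
  assumes "sorted_wrt (<) js"
  shows "recs (map f js) = map f (filter (\<lambda>j. \<forall>k\<in>set js. k < j \<longrightarrow> f k < f j) js)"
  using assms
proof (induction "length js" arbitrary: js rule: less_induct)
  case less
  show ?case
  proof (cases js)
    case Nil then show ?thesis by simp
  next
    case (Cons j js')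
    let ?fs = "filter (\<lambda>i. f j < f i) js'"
    have s: "sorted_wrt (<) ?fs" using less.prems Cons by (simp add: sorted_wrt_filter)
    have l: "length ?fs < length js" using Cons by (simp add: le_imp_less_Suc)
    have "recs (map f js) = f j # recs (map f ?fs)"
      using Cons by (simp add: filter_map comp_def)
    also have "recs (map f ?fs) = map f (filter (\<lambda>i. \<forall>k\<in>set ?fs. k < i \<longrightarrow> f k < f i) ?fs)"
      using less.hyps[OF l s] .
    also have "filter (\<lambda>i. \<forall>k\<in>set ?fs. k < i \<longrightarrow> f k < f i) ?fs
       = filter (\<lambda>i. \<forall>k\<in>set js. k < i \<longrightarrow> f k < f i) js'"
      unfolding filter_filter
      using less.prems Cons by (auto intro!: filter_cong)
    finally show ?thesis using less.prems Cons by (auto dest: order_less_asym)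
  qed
qed

lemma nth_card_less:
  assumes "sorted_wrt (<) (J::int list)" "x \<in> set J"
  shows "card {y\<in>set J. y < x} < length J \<and> J ! card {y\<in>set J. y < x} = x"
proof -
  obtain i where i: "i < length J" "J ! i = x" using assms(2) by (auto simp: in_set_conv_nth)
  have "{y\<in>set J. y < x} = (\<lambda>k. J ! k) ` {..<i}"
  proof -
    have "J ! k < J ! i \<longleftrightarrow> k < i" if "k < length J" for k
      using assms(1) that i(1) by (metis linorder_neqE_nat order_less_asym sorted_wrt_nth_less)
    then show ?thesis using i by (auto simp: in_set_conv_nth image_iff) (metis order.strict_trans)+
  qed
  moreover have "inj_on (\<lambda>k. J ! k) {..<i}"
    using assms(1) i(1) by (auto simp: inj_on_def) (metis linorder_neqE_nat order_less_irrefl sorted_wrt_nth_less order.strict_trans lessThan_iff)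
  ultimately have "card {y\<in>set J. y < x} = i" by (simp add: card_image)
  then show ?thesis using i by simp
qed

lemma shiftT_mem:
  assumes "in_TL v"
  shows "(k, v) \<in> shiftT m A \<longleftrightarrow> 0 \<le> k - m \<and> replicate (nat (k - m)) True @ v \<in> A"
proof
  assume "(k, v) \<in> shiftT m A"
  then obtain w where w: "w \<in> A" "int (length (takeWhile id w)) + m = k" "dropWhile id w = v"
    by (auto simp: shiftT_def T_to_Y_def)
  have "takeWhile id w = replicate (length (takeWhile id w)) True"
    by (metis (full_types) id_apply replicate_length_same set_takeWhileD)
  then have "w = replicate (nat (k - m)) True @ v" using w
    by (metis nat_int add_diff_cancel_right' takeWhile_dropWhile_id)
  then show "0 \<le> k - m \<and> replicate (nat (k - m)) True @ v \<in> A" using w by auto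
next
  assume h: "0 \<le> k - m \<and> replicate (nat (k - m)) True @ v \<in> A"
  let ?w = "replicate (nat (k - m)) True @ v"
  have "takeWhile id ?w = replicate (nat (k - m)) True" "dropWhile id ?w = v"
  proof -
    have "takeWhile id v = [] \<and> dropWhile id v = v" using assms unfolding in_TL_def by (cases v) auto
    then show "takeWhile id ?w = replicate (nat (k - m)) True" "dropWhile id ?w = v"
      by (simp_all add: takeWhile_append dropWhile_append)
  qed
  then have "T_to_Y ?w = (k - m, v)" using h by (simp add: T_to_Y_def)
  then show "(k, v) \<in> shiftT m A" using h unfolding shiftT_def by (auto intro!: image_eqI[where x="?w"])
qed

theorem proposition2p5:
  fixes \<sigma> r :: "int \<Rightarrow> int" and I :: "int set"
  assumes "admissible \<sigma>"
    and "standard_record_rep \<sigma> r"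
    and "finite I"
  shows "\<exists>n0::nat. \<forall>n\<ge>n0.
           RBST \<sigma> r \<inter> strips I
           = shiftT (- int (s_count \<sigma> n)) (bst (restr \<sigma> n)) \<inter> strips I"
proof -
  have inj: "inj \<sigma>" using assms(1) by (simp add: admissible_def bij_is_inj)
  have sm: "strict_mono r" and rng: "range r = {i. record_index \<sigma> i}"
    and r0: "\<sigma> (r 0) \<le> 0" and r1: "0 < \<sigma> (r 1)"
    using assms(2) by (auto simp: standard_record_rep_def)
  have recr: "\<sigma> k < \<sigma> (r i)" if "k < r i" for k i
  proof -
    have "r i \<in> {i. record_index \<sigma> i}" using rng by blast
    then show ?thesis using that by (auto simp: record_index_def)
  qed
  have rless: "r i < r j \<longleftrightarrow> i < j" for i j using sm by (simp add: strict_mono_less)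
  have rle: "r i \<le> r j \<longleftrightarrow> i \<le> j" for i j using sm by (simp add: strict_mono_less_eq)
  have rinj: "inj r" using sm by (rule strict_mono_imp_inj_on)
  define a where "a = Min (insert 0 I)"
  define b where "b = Max (insert 0 I) + 1"
  have a0: "a \<le> 0" and aI: "\<forall>k\<in>I. a \<le> k" and b1: "1 \<le> b" and bI: "\<forall>k\<in>I. k + 1 \<le> b"
    using assms(3) by (auto simp: a_def b_def)
  define B where "B k = {i. \<sigma> (r k) < \<sigma> i \<and> \<sigma> i < \<sigma> (r (k+1))}" for k
  have finB: "finite (B k)" for k
  proof -
    have "B k = \<sigma> -` {\<sigma> (r k)<..<\<sigma> (r (k+1))}" by (auto simp: B_def)
    then show ?thesis using finite_vimageI[OF finite_greaterThanLessThan_int inj] by simp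
  qed
  define U where "U = (\<Union>k\<in>I. B k)"
  have finU: "finite U" using assms(3) finB by (simp add: U_def)
  define N where "N = nat (max (max (- r a) (r b)) (Max (abs ` insert 0 U)))"
  have Na: "- int N \<le> r a" "r b \<le> int N" unfolding N_def by linarith+
  have NU: "\<bar>i\<bar> \<le> int N" if "i \<in> U" for i
  proof -
    have "\<bar>i\<bar> \<le> Max (abs ` insert 0 U)" using finU that by (intro Max_ge) auto
    then show ?thesis unfolding N_def by linarith
  qed
  show ?thesis
  proof (intro exI[of _ N] allI impI)
    fix n assume "N \<le> n"
    then have na: "- int n \<le> r a" and nb: "r b \<le> int n"
      and nU: "\<And>i. i \<in> U \<Longrightarrow> - int n \<le> i \<and> i \<le> int n"
      using Na NU by force+
    define isr where "isr j = (\<forall>k\<in>{-int n..<j}. \<sigma> k < \<sigma> j)" for j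
    define J where "J = filter isr [-int n..int n]"
    have setJ: "j \<in> set J \<longleftrightarrow> j \<in> {-int n..int n} \<and> isr j" for j
      by (auto simp: J_def)
    have sJ: "sorted_wrt (<) J" unfolding J_def by (simp add: sorted_wrt_filter)
    have recsJ: "recs (restr \<sigma> n) = map \<sigma> J"
      unfolding restr_def J_def isr_def
      by (subst recs_map) (auto intro!: filter_cong arg_cong[where f="map \<sigma>"])
    have recJ: "j \<in> set J \<longleftrightarrow> record_index \<sigma> j" if "r a \<le> j" "j \<le> int n" for j
    proof
      assume "j \<in> set J"
      then have h: "isr j" and "- int n \<le> j" by (auto simp: setJ)
      show "record_index \<sigma> j" unfolding record_index_def
      proof (intro allI impI)
        fix k assume "k < j"
        show "\<sigma> k < \<sigma> j"
        proof (cases "- int n \<le> k")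
          case True then show ?thesis using h \<open>k < j\<close> by (auto simp: isr_def)
        next
          case False
          then have "\<sigma> k < \<sigma> (r a)" using na by (intro recr) auto
          moreover have "\<sigma> (r a) \<le> \<sigma> j"
          proof (cases "r a = j")
            case False
            then have "r a \<in> {-int n..<j}" using that na by auto
            then show ?thesis using h by (auto simp: isr_def intro: less_imp_le)
          qed simp
          ultimately show ?thesis by simp
        qed
      qed
    next
      assume "record_index \<sigma> j"
      then show "j \<in> set J" using that na by (auto simp: setJ isr_def record_index_def)
    qed
    have Jr: "j \<in> set J \<longleftrightarrow> (\<exists>i\<in>{a..b}. j = r i)" if "r a \<le> j" "j \<le> r b" for j
    proof -
      have "j \<in> set J \<longleftrightarrow> j \<in> range r" using recJ[of j] that nb rng by auto
      also have "\<dots> \<longleftrightarrow> (\<exists>i\<in>{a..b}. j = r i)" using that rle by auto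
      finally show ?thesis .
    qed
    define p where "p = card {j\<in>set J. j < r a}"
    have cnt: "r m \<in> set J \<and> card {j\<in>set J. j < r m} = p + nat (m - a)" if "a \<le> m" "m \<le> b" for m
    proof -
      have mem: "r m \<in> set J" using Jr[of "r m"] that rle by auto
      have eq: "{j\<in>set J. j < r m} = {j\<in>set J. j < r a} \<union> r ` {a..<m}"
      proof (intro set_eqI iffI)
        fix j assume "j \<in> {j\<in>set J. j < r m}"
        then have jJ: "j \<in> set J" and jm: "j < r m" by auto
        show "j \<in> {j\<in>set J. j < r a} \<union> r ` {a..<m}"
        proof (cases "j < r a")
          case False
          have "j \<le> r b" using jm rle[of m b] that by simp
          then obtain i where i: "i \<in> {a..b}" "j = r i" using Jr[of j] jJ False by auto
          then have "i < m" using jm rless by simp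
          then show ?thesis using i by auto
        qed (use jJ in simp)
      next
        fix j assume "j \<in> {j\<in>set J. j < r a} \<union> r ` {a..<m}"
        then show "j \<in> {j\<in>set J. j < r m}"
        proof
          assume "j \<in> {j\<in>set J. j < r a}"
          then show ?thesis using rle[of a m] that by auto
        next
          assume "j \<in> r ` {a..<m}"
          then obtain i where i: "a \<le> i" "i < m" "j = r i" by auto
          then have "j \<in> set J" using Jr[of j] rle[of a i] rle[of i b] that by auto
          then show ?thesis using i rless by auto
        qed
      qed
      have "card {j\<in>set J. j < r m} = p + card (r ` {a..<m})"
        unfolding eq p_def by (rule card_Un_disjoint) (auto simp: rless)
      also have "card (r ` {a..<m}) = nat (m - a)"
        using rinj by (simp add: card_image inj_on_subset)
      finally show ?thesis using mem by simp
    qed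
    have scount: "s_count \<sigma> n = p + nat (1 - a)"
    proof -
      have "{j \<in> {- int n .. int n}. (\<forall>k \<in> {- int n ..< j}. \<sigma> k < \<sigma> j) \<and> \<sigma> j \<le> 0}
          = {j\<in>set J. j < r 1}"
      proof (intro set_eqI iffI)
        fix j assume j: "j \<in> {j \<in> {- int n .. int n}. (\<forall>k \<in> {- int n ..< j}. \<sigma> k < \<sigma> j) \<and> \<sigma> j \<le> 0}"
        then have jJ: "j \<in> set J" by (auto simp: setJ isr_def)
        have "j < r 1"
        proof (rule ccontr)
          assume "\<not> j < r 1"
          then have "\<sigma> (r 1) \<le> \<sigma> j"
          proof (cases "j = r 1")
            case False
            then have "r 1 \<in> {-int n..<j}" using \<open>\<not> j < r 1\<close> na rle[of a 1] a0 by auto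
            then show ?thesis using j by (auto intro: less_imp_le)
          qed simp
          then show False using j r1 by auto
        qed
        then show "j \<in> {j\<in>set J. j < r 1}" using jJ by simp
      next
        fix j assume j: "j \<in> {j\<in>set J. j < r 1}"
        have "\<sigma> j \<le> 0"
        proof (cases "j < r 0")
          case True then show ?thesis using recr[of j 0] r0 by simp
        next
          case False
          then have "r a \<le> j" using rle[of a 0] a0 by simp
          moreover have "j \<le> r b" using j rle[of 1 b] b1 by simp
          ultimately obtain i where "i \<in> {a..b}" "j = r i" using Jr j by auto
          moreover have "j < r 1" using j by simp
          ultimately have "i < 1" "\<not> i < 0" using False rless by auto
          then have "i = 0" by simp
          then show ?thesis using r0 \<open>j = r i\<close> by simp
        qed
        then show "j \<in> {j \<in> {- int n .. int n}. (\<forall>k \<in> {- int n ..< j}. \<sigma> k < \<sigma> j) \<and> \<sigma> j \<le> 0}"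
          using j by (auto simp: setJ isr_def)
      qed
      then show ?thesis using cnt[of 1] a0 b1 unfolding s_count_def by simp
    qed
    define s where "s = s_count \<sigma> n"
    have key: "(k, v) \<in> RBST \<sigma> r \<longleftrightarrow> (k, v) \<in> shiftT (- int s) (bst (restr \<sigma> n))"
      if kI: "k \<in> I" and v: "in_TL v" for k v
    proof -
      define idx where "idx = p + nat (k + 1 - a)"
      have ka: "a \<le> k" "k + 1 \<le> b" using aI bI kI by auto
      have c1: "J ! idx = r (k+1)" "idx < length J"
        using cnt[of "k+1"] nth_card_less[OF sJ, of "r (k+1)"] ka unfolding idx_def by auto
      have c0: "J ! (idx - 1) = r k"
      proof -
        have "idx - 1 = p + nat (k - a)" unfolding idx_def using ka by simp
        then show ?thesis
          using cnt[of k] nth_card_less[OF sJ, of "r k"] ka by auto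
      qed
      have ipos: "0 < idx" unfolding idx_def using ka by simp
      have sidx: "k - - int s = int idx" "0 \<le> k - - int s"
        unfolding s_def scount idx_def using ka a0 by auto
      have lenR: "idx < length (recs (restr \<sigma> n))" using c1 recsJ by simp
      have Rk1: "recs (restr \<sigma> n) ! idx = \<sigma> (r (k+1))" using c1 recsJ by simp
      have Rk: "recs (restr \<sigma> n) ! (idx - 1) = \<sigma> (r k)" using c0 c1 recsJ by simp
      have filt: "filter (\<lambda>y. y < recs (restr \<sigma> n) ! idx \<and> (0 < idx \<longrightarrow> recs (restr \<sigma> n) ! (idx - 1) < y))
                    (restr \<sigma> n) = block \<sigma> r k"
      proof -
        have "filter (\<lambda>i. \<sigma> (r k) < \<sigma> i \<and> \<sigma> i < \<sigma> (r (k+1))) [-int n..int n]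
              = sorted_list_of_set (B k)"
        proof (rule sorted_distinct_set_unique)
          have "B k \<subseteq> U" using kI by (auto simp: U_def)
          then have "B k \<subseteq> {-int n..int n}" using nU by auto
          then show "set (filter (\<lambda>i. \<sigma> (r k) < \<sigma> i \<and> \<sigma> i < \<sigma> (r (k+1))) [-int n..int n])
                     = set (sorted_list_of_set (B k))"
            using finB by (auto simp: B_def)
        qed (simp_all add: sorted_wrt_filter)
        then show ?thesis using Rk Rk1 ipos
          by (simp add: restr_def block_def B_def filter_map comp_def conj_commute)
      qed
      have "(k, v) \<in> shiftT (- int s) (bst (restr \<sigma> n))
            \<longleftrightarrow> replicate idx True @ v \<in> bst (restr \<sigma> n)"
        using shiftT_mem[OF v] sidx by simp
      also have "\<dots> \<longleftrightarrow> (k, v) \<in> RBST \<sigma> r"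
      proof (cases v)
        case Nil then show ?thesis using bst_spine lenR by (auto simp: RBST_def)
      next
        case (Cons c u)
        then have "c = False" using v by (simp add: in_TL_def)
        then show ?thesis using Cons bst_left[of idx u "restr \<sigma> n"] lenR filt
          by (auto simp: RBST_def)
      qed
      finally show ?thesis by simp
    qed
    show "RBST \<sigma> r \<inter> strips I = shiftT (- int (s_count \<sigma> n)) (bst (restr \<sigma> n)) \<inter> strips I"
      using key unfolding s_def strips_def by auto
  qed
qed

end
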